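(* Every CPA-structure on a finite-dimensional complex semisimple Lie algebra is trivial. Furthermore, every CPA-structure on a finite-dimensional complex Lie algebra $\mathfrak{g}$ satisfies $\mathfrak{g}\cdot\mathfrak{g}\subseteq\mathrm{rad}(\mathfrak{g})$, where $\mathrm{rad}(\mathfrak{g})$ is the solvable radical.
   Context: A CPA-structure on a Lie algebra $\mathfrak{g}$ is a bilinear product $x\cdot y$ on $\mathfrak{g}$ satisfying, for all $x,y,z$: $x\cdot y=y\cdot x$; $[x,y]\cdot z=x\cdot(y\cdot z)-y\cdot(x\cdot z)$; $x\cdot[y,z]=[x\cdot y,z]+[y,x\cdot z]$. It is trivial if $x\cdot y=0$ for all $x,y$. *)

theory Defs
  imports Complex_Main
begin

text \<open>A complex Lie algebra: the carrier is the whole type 'a, with complex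
  scalar multiplication sc and Lie bracket br.\<close>

definition bilinear_map :: "(complex \<Rightarrow> 'a::ab_group_add \<Rightarrow> 'a) \<Rightarrow> ('a \<Rightarrow> 'a \<Rightarrow> 'a) \<Rightarrow> bool" where
  "bilinear_map sc p \<longleftrightarrow>
     (\<forall>x. Vector_Spaces.linear sc sc (p x)) \<and> (\<forall>y. Vector_Spaces.linear sc sc (\<lambda>x. p x y))"

definition lie_algebra :: "(complex \<Rightarrow> 'a::ab_group_add \<Rightarrow> 'a) \<Rightarrow> ('a \<Rightarrow> 'a \<Rightarrow> 'a) \<Rightarrow> bool" where
  "lie_algebra sc br \<longleftrightarrow>
     vector_space sc \<and> bilinear_map sc br \<and>
     (\<forall>x. br x x = 0) \<and>
     (\<forall>x y z. br x (br y z) + br y (br z x) + br z (br x y) = 0)"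

definition finite_dim :: "(complex \<Rightarrow> 'a::ab_group_add \<Rightarrow> 'a) \<Rightarrow> bool" where
  "finite_dim sc \<longleftrightarrow> (\<exists>B. finite B \<and> module.span sc B = UNIV)"

definition lie_ideal :: "(complex \<Rightarrow> 'a::ab_group_add \<Rightarrow> 'a) \<Rightarrow> ('a \<Rightarrow> 'a \<Rightarrow> 'a) \<Rightarrow> 'a set \<Rightarrow> bool" where
  "lie_ideal sc br I \<longleftrightarrow> module.subspace sc I \<and> (\<forall>x y. y \<in> I \<longrightarrow> br x y \<in> I)"

fun derived_series :: "(complex \<Rightarrow> 'a::ab_group_add \<Rightarrow> 'a) \<Rightarrow> ('a \<Rightarrow> 'a \<Rightarrow> 'a) \<Rightarrow> 'a set \<Rightarrow> nat \<Rightarrow> 'a set" where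
  "derived_series sc br I 0 = I"
| "derived_series sc br I (Suc k) =
     module.span sc {br x y | x y. x \<in> derived_series sc br I k \<and> y \<in> derived_series sc br I k}"

definition solvable_set :: "(complex \<Rightarrow> 'a::ab_group_add \<Rightarrow> 'a) \<Rightarrow> ('a \<Rightarrow> 'a \<Rightarrow> 'a) \<Rightarrow> 'a set \<Rightarrow> bool" where
  "solvable_set sc br I \<longleftrightarrow> (\<exists>k. derived_series sc br I k = {0})"

definition lie_radical :: "(complex \<Rightarrow> 'a::ab_group_add \<Rightarrow> 'a) \<Rightarrow> ('a \<Rightarrow> 'a \<Rightarrow> 'a) \<Rightarrow> 'a set" where
  "lie_radical sc br = module.span sc (\<Union>{I. lie_ideal sc br I \<and> solvable_set sc br I})"

definition semisimple :: "(complex \<Rightarrow> 'a::ab_group_add \<Rightarrow> 'a) \<Rightarrow> ('a \<Rightarrow> 'a \<Rightarrow> 'a) \<Rightarrow> bool" where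
  "semisimple sc br \<longleftrightarrow> (\<forall>I. lie_ideal sc br I \<and> solvable_set sc br I \<longrightarrow> I = {0})"

definition CPA_structure :: "(complex \<Rightarrow> 'a::ab_group_add \<Rightarrow> 'a) \<Rightarrow> ('a \<Rightarrow> 'a \<Rightarrow> 'a) \<Rightarrow> ('a \<Rightarrow> 'a \<Rightarrow> 'a) \<Rightarrow> bool" where
  "CPA_structure sc br m \<longleftrightarrow>
     bilinear_map sc m \<and>
     (\<forall>x y. m x y = m y x) \<and>
     (\<forall>x y z. m (br x y) z = m x (m y z) - m y (m x z)) \<and>
     (\<forall>x y z. m x (br y z) = br (m x y) z + br y (m x z))"

end

theory Submission
  imports Defs "HOL-Computational_Algebra.Computational_Algebra" "HOL-Computational_Algebra.Field_as_Ring"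
begin


locale LA =
  fixes sc :: "complex \<Rightarrow> 'a::ab_group_add \<Rightarrow> 'a" and br :: "'a \<Rightarrow> 'a \<Rightarrow> 'a"
  assumes lie: "lie_algebra sc br" and fd: "finite_dim sc"
begin

lemma vs: "vector_space sc" using lie by (simp add: lie_algebra_def)
sublocale vector_space sc by (rule vs)

definition lin :: "('a \<Rightarrow> 'a) \<Rightarrow> bool" where
 "lin f \<longleftrightarrow> (\<forall>x y. f (x + y) = f x + f y) \<and> (\<forall>c x. f (sc c x) = sc c (f x))"

lemma lin_iff: "Vector_Spaces.linear sc sc f \<longleftrightarrow> lin f"
  using vs by (simp add: Vector_Spaces.linear_iff lin_def)

lemma lin_add: "lin f \<Longrightarrow> f (x + y) = f x + f y" by (simp add: lin_def)
lemma lin_scale: "lin f \<Longrightarrow> f (sc c x) = sc c (f x)" by (simp add: lin_def)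
lemma lin_0: "lin f \<Longrightarrow> f 0 = 0"
  by (metis add_cancel_right_left lin_add)
lemma lin_neg: "lin f \<Longrightarrow> f (- x) = - f x"
  by (metis add.right_inverse eq_neg_iff_add_eq_0 lin_0 lin_add)
lemma lin_diff: "lin f \<Longrightarrow> f (x - y) = f x - f y"
  by (metis diff_conv_add_uminus lin_add lin_neg)
lemma lin_sum: "lin f \<Longrightarrow> f (sum g A) = (\<Sum>a\<in>A. f (g a))"
  by (induction A rule: infinite_finite_induct) (auto simp: lin_0 lin_add)
lemma lin_span: assumes "lin f" "\<And>x. x \<in> S \<Longrightarrow> f x \<in> T" "subspace T" "x \<in> span S"
  shows "f x \<in> T"
  using assms(4)
proof (induction rule: span_induct_alt)
  case base then show ?case using assms by (simp add: lin_0 subspace_0)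
next
  case (step c x y) then show ?case using assms
    by (simp add: lin_add lin_scale subspace_add subspace_scale)
qed
lemma lin_comp: "lin f \<Longrightarrow> lin g \<Longrightarrow> lin (f \<circ> g)" by (simp add: lin_def)
lemma lin_id: "lin id" "lin (\<lambda>x. x)" by (simp_all add: lin_def)
lemma lin_plus: "lin f \<Longrightarrow> lin g \<Longrightarrow> lin (\<lambda>x. f x + g x)"
  by (simp add: lin_def algebra_simps scale_right_distrib)
lemma lin_minus: "lin f \<Longrightarrow> lin g \<Longrightarrow> lin (\<lambda>x. f x - g x)"
  by (simp add: lin_def algebra_simps scale_right_diff_distrib)
lemma lin_smult: "lin f \<Longrightarrow> lin (\<lambda>x. sc c (f x))"
  by (simp add: lin_def scale_right_distrib)
lemma lin_funpow: "lin f \<Longrightarrow> lin (f ^^ k)"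
  by (induction k) (simp_all add: lin_def)
lemma lin_zero: "lin (\<lambda>x. 0)" by (simp add: lin_def)

lemma bil: "bilinear_map sc br" using lie by (simp add: lie_algebra_def)
lemma br_lin_r: "lin (br x)" using bil by (simp add: bilinear_map_def lin_iff)
lemma br_lin_l: "lin (\<lambda>y. br y z)" using bil by (simp add: bilinear_map_def lin_iff)
lemma br_alt [simp]: "br x x = 0" using lie by (simp add: lie_algebra_def)
lemma jacobi: "br x (br y z) + br y (br z x) + br z (br x y) = 0"
  using lie by (simp add: lie_algebra_def)

lemma br_add_r: "br x (y + z) = br x y + br x z" by (rule lin_add[OF br_lin_r])
lemma br_add_l: "br (y + z) x = br y x + br z x" by (rule lin_add[OF br_lin_l[of x]])
lemma br_scale_r: "br x (sc c y) = sc c (br x y)" by (rule lin_scale[OF br_lin_r])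
lemma br_scale_l: "br (sc c y) x = sc c (br y x)" by (rule lin_scale[OF br_lin_l[of x]])
lemma br_0_r [simp]: "br x 0 = 0" by (rule lin_0[OF br_lin_r])
lemma br_0_l [simp]: "br 0 x = 0" by (rule lin_0[OF br_lin_l[of x]])
lemma br_neg_r: "br x (- y) = - br x y" by (rule lin_neg[OF br_lin_r])
lemma br_neg_l: "br (- y) x = - br y x" by (rule lin_neg[OF br_lin_l[of x]])
lemma br_diff_r: "br x (y - z) = br x y - br x z" by (rule lin_diff[OF br_lin_r])
lemma br_diff_l: "br (y - z) x = br y x - br z x" by (rule lin_diff[OF br_lin_l[of x]])
lemma br_anti: "br x y = - br y x"
proof -
  have "br (x + y) (x + y) = (br x x + br y x) + (br x y + br y y)" by (simp only: br_add_l br_add_r)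
  then have "br x y + br y x = 0" by (simp add: add.commute)
  then show ?thesis by (simp add: eq_neg_iff_add_eq_0)
qed
lemma grp3: "(a::'b::ab_group_add) + b + c = 0 \<Longrightarrow> a = - b - c"
proof -
  assume h: "a + b + c = 0"
  have "a = (a + b + c) - b - c" by (simp add: algebra_simps)
  then show ?thesis by (simp add: h)
qed

lemma br_jac: "br x (br y z) = br (br x y) z + br y (br x z)"
proof -
  have h1: "br y (br z x) = - br y (br x z)" by (subst br_anti[of z x], rule br_neg_r)
  have h2: "br z (br x y) = - br (br x y) z" by (rule br_anti)
  have "br x (br y z) = - br y (br z x) - br z (br x y)" by (rule grp3[OF jacobi])
  also have "\<dots> = br y (br x z) + br (br x y) z" unfolding h1 h2 by (simp only: minus_minus diff_minus_eq_add)
  also have "\<dots> = br (br x y) z + br y (br x z)" by (rule add.commute)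
  finally show ?thesis .
qed

end
context LA begin

lemma basis_ex: "\<exists>B. finite B \<and> independent B \<and> span B = UNIV"
proof -
  obtain B where B: "finite B" "span B = UNIV" using fd unfolding finite_dim_def by blast
  obtain C where C: "C \<subseteq> B" "independent C" "B \<subseteq> span C"
    using maximal_independent_subset[of B] by blast
  have "span B \<subseteq> span C" using C(3) span_minimal subspace_span by blast
  then have "span C = UNIV" using B by auto
  moreover have "finite C" using C(1) B(1) by (rule finite_subset)
  ultimately show ?thesis using C(2) by blast
qed

definition "Bs = (SOME B. finite B \<and> independent B \<and> span B = UNIV)"
lemma Bs: "finite Bs" "independent Bs" "span Bs = UNIV"
  using someI_ex[OF basis_ex] unfolding Bs_def by auto

sublocale fdv: finite_dimensional_vector_space sc Bs
  by unfold_locales (use Bs in auto)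

definition isb :: "'a set \<Rightarrow> bool" where "isb C \<longleftrightarrow> finite C \<and> independent C \<and> span C = UNIV"
lemma isb_Bs: "isb Bs" using Bs by (simp add: isb_def)

lemma rep_add: "isb C \<Longrightarrow> representation C (x + y) b = representation C x b + representation C y b"
  by (simp add: isb_def representation_add)
lemma rep_scale: "isb C \<Longrightarrow> representation C (sc a x) b = a * representation C x b"
  by (simp add: isb_def representation_scale)
lemma rep_diff: "isb C \<Longrightarrow> representation C (x - y) b = representation C x b - representation C y b"
  by (simp add: isb_def representation_diff)
lemma rep_sum: "isb C \<Longrightarrow> representation C (sum v B) b = (\<Sum>i\<in>B. representation C (v i) b)"
  by (simp add: isb_def representation_sum)
lemma rep_comb: "isb C \<Longrightarrow> representation C (\<Sum>i\<in>B. sc (a i) (v i)) c = (\<Sum>i\<in>B. a i * representation C (v i) c)"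
  by (simp add: rep_sum rep_scale)
lemma rep_expand: "isb C \<Longrightarrow> (\<Sum>c\<in>C. sc (representation C v c) c) = v"
  unfolding isb_def by (rule sum_representation_eq) auto

lemma tr_indep:
  assumes B: "isb B" and C: "isb C" and f: "lin f"
  shows "(\<Sum>b\<in>B. representation B (f b) b) = (\<Sum>c\<in>C. representation C (f c) c)"
proof -
  let ?RB = "representation B" and ?RC = "representation C"
  have "(\<Sum>b\<in>B. ?RB (f b) b) = (\<Sum>b\<in>B. ?RB (f (\<Sum>c\<in>C. sc (?RC b c) c)) b)"
    using rep_expand[OF C] by simp
  also have "\<dots> = (\<Sum>b\<in>B. ?RB (\<Sum>c\<in>C. sc (?RC b c) (f c)) b)"
    using f by (simp add: lin_sum lin_scale)
  also have "\<dots> = (\<Sum>b\<in>B. \<Sum>c\<in>C. ?RC b c * ?RB (f c) b)"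
    using B by (simp add: rep_comb)
  also have "\<dots> = (\<Sum>c\<in>C. \<Sum>b\<in>B. ?RB (f c) b * ?RC b c)"
    by (subst sum.swap) (simp add: mult.commute)
  also have "\<dots> = (\<Sum>c\<in>C. ?RC (\<Sum>b\<in>B. sc (?RB (f c) b) b) c)"
    using C by (simp add: rep_comb)
  also have "\<dots> = (\<Sum>c\<in>C. ?RC (f c) c)"
    using rep_expand[OF B] by simp
  finally show ?thesis .
qed

definition tr :: "('a \<Rightarrow> 'a) \<Rightarrow> complex" where
  "tr f = (\<Sum>b\<in>Bs. representation Bs (f b) b)"

lemma tr_basis: "isb C \<Longrightarrow> lin f \<Longrightarrow> tr f = (\<Sum>c\<in>C. representation C (f c) c)"
  unfolding tr_def by (rule tr_indep[OF isb_Bs])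

lemma tr_comp_aux: "lin f \<Longrightarrow> tr (\<lambda>x. f (g x)) = (\<Sum>b\<in>Bs. \<Sum>b'\<in>Bs. representation Bs (g b) b' * representation Bs (f b') b)"
proof -
  assume f: "lin f"
  let ?R = "representation Bs"
  have "tr (\<lambda>x. f (g x)) = (\<Sum>b\<in>Bs. ?R (f (\<Sum>b'\<in>Bs. sc (?R (g b) b') b')) b)"
    unfolding tr_def using rep_expand[OF isb_Bs] by simp
  also have "\<dots> = (\<Sum>b\<in>Bs. ?R (\<Sum>b'\<in>Bs. sc (?R (g b) b') (f b')) b)"
    using f by (simp add: lin_sum lin_scale)
  also have "\<dots> = (\<Sum>b\<in>Bs. \<Sum>b'\<in>Bs. ?R (g b) b' * ?R (f b') b)"
    using isb_Bs by (simp add: rep_comb)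
  finally show ?thesis .
qed

lemma tr_comp: "lin f \<Longrightarrow> lin g \<Longrightarrow> tr (\<lambda>x. f (g x)) = tr (\<lambda>x. g (f x))"
  unfolding tr_comp_aux
  by (subst (2) sum.swap) (simp add: mult.commute)

lemma tr_add: "tr (\<lambda>x. f x + g x) = tr f + tr g"
  unfolding tr_def by (simp add: rep_add[OF isb_Bs] sum.distrib)
lemma tr_diff: "tr (\<lambda>x. f x - g x) = tr f - tr g"
  unfolding tr_def by (simp add: rep_diff[OF isb_Bs] sum_subtractf)
lemma tr_scale: "tr (\<lambda>x. sc c (f x)) = c * tr f"
  unfolding tr_def by (simp add: rep_scale[OF isb_Bs] sum_distrib_left)
lemma tr_sum: "tr (\<lambda>x. \<Sum>i\<in>I. f i x) = (\<Sum>i\<in>I. tr (f i))"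
  unfolding tr_def by (simp add: rep_sum[OF isb_Bs] sum.swap[of _ I])

end
context LA begin

definition der :: "('a \<Rightarrow> 'a) \<Rightarrow> bool" where
  "der D \<longleftrightarrow> lin D \<and> (\<forall>a b. D (br a b) = br (D a) b + br a (D b))"

lemma der_ad: "der (br x)"
  unfolding der_def using br_lin_r br_jac by blast

lemma der_lin: "der D \<Longrightarrow> lin D" by (simp add: der_def)

lemma ad_der: "der D \<Longrightarrow> br (D x) v = D (br x v) - br x (D v)"
  unfolding der_def by (metis add_diff_cancel_right')

definition kil :: "'a \<Rightarrow> 'a \<Rightarrow> complex" where
  "kil x y = tr (\<lambda>v. br x (br y v))"

lemma tr_neg: "tr (\<lambda>x. - f x) = - tr f"
  using tr_diff[of "\<lambda>x. 0" f] by (simp add: tr_def rep_scale[OF isb_Bs] representation_zero)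

lemma tr_0: "tr (\<lambda>v. 0) = 0"
  by (simp add: tr_def representation_zero)

lemma lin_ad2: "lin (\<lambda>v. br x (br y v))"
  using lin_comp[OF br_lin_r br_lin_r] by (simp add: comp_def)

lemma kil_sym: "kil x y = kil y x"
  unfolding kil_def by (rule tr_comp[OF br_lin_r br_lin_r])

lemma kil_inv:
  assumes D: "der D" shows "kil (D x) y + kil x (D y) = 0"
proof -
  have l: "lin D" using D by (rule der_lin)
  have e1: "kil (D x) y = tr (\<lambda>v. D (br x (br y v))) - tr (\<lambda>v. br x (D (br y v)))"
    unfolding kil_def ad_der[OF D] by (rule tr_diff)
  have e2: "kil x (D y) = tr (\<lambda>v. br x (D (br y v))) - tr (\<lambda>v. br x (br y (D v)))"
    unfolding kil_def ad_der[OF D] br_diff_r by (rule tr_diff)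
  have e3: "tr (\<lambda>v. D (br x (br y v))) = tr (\<lambda>v. br x (br y (D v)))"
    by (rule tr_comp[OF l lin_ad2])
  show ?thesis unfolding e1 e2 e3 by simp
qed

lemma kil_add: "kil (x + x') y = kil x y + kil x' y"
  unfolding kil_def br_add_l by (rule tr_add)
lemma kil_scale: "kil (sc c x) y = c * kil x y"
  unfolding kil_def br_scale_l by (rule tr_scale)
lemma kil_0: "kil 0 y = 0"
  using kil_scale[of 0 0 y] by simp

definition Kset :: "'a set" where "Kset = {x. \<forall>y. kil x y = 0}"

lemma subspace_K: "subspace Kset"
  unfolding subspace_def Kset_def by (simp add: kil_add kil_scale kil_0)

lemma K_ideal: "lie_ideal sc br Kset"
  unfolding lie_ideal_def
proof (intro conjI allI impI)
  show "subspace Kset" by (rule subspace_K)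
  fix x y assume "y \<in> Kset"
  then have "\<forall>z. kil y z = 0" by (simp add: Kset_def)
  moreover have "kil (br x y) z = - kil y (br x z)" for z
    using kil_inv[OF der_ad, of x y z] by (simp add: eq_neg_iff_add_eq_0)
  ultimately show "br x y \<in> Kset" by (simp add: Kset_def)
qed

lemma CPA_in_K:
  assumes m: "CPA_structure sc br m" shows "m x y \<in> Kset"
proof -
  have bl: "bilinear_map sc m" and comm: "\<And>x y. m x y = m y x"
    and d3: "\<And>x y z. m x (br y z) = br (m x y) z + br y (m x z)"
    using m unfolding CPA_structure_def by auto
  have der: "der (m x)" for x
    unfolding der_def using bl d3 by (simp add: bilinear_map_def lin_iff)
  define \<beta> where "\<beta> x y z = kil (m x y) z" for x y z
  have s12: "\<beta> x y z = \<beta> y x z" for x y z unfolding \<beta>_def by (simp add: comm)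
  have a23: "\<beta> x y z = - \<beta> x z y" for x y z
    using kil_inv[OF der, of x y z] unfolding \<beta>_def
    by (simp add: eq_neg_iff_add_eq_0 kil_sym)
  have "\<beta> x y z = - \<beta> x y z" for z
    by (metis a23 s12 minus_minus)
  then have "\<beta> x y z = 0" for z by simp
  then show ?thesis unfolding Kset_def \<beta>_def by simp
qed

definition Kg :: "'a set" where "Kg = span {br a b | a b. a \<in> Kset}"

lemma tr_K_der:
  assumes a: "a \<in> Kset" and E: "der E"
  shows "tr (\<lambda>v. br (br a b) (E v)) = 0"
proof -
  have lE: "lin E" using E by (rule der_lin)
  have j: "br (br a b) w = br a (br b w) - br b (br a w)" for w
    using br_jac[of a b w] by (simp add: algebra_simps)
  have l2: "lin (\<lambda>v. br a (E v))" using lin_comp[OF br_lin_r lE] by (simp add: comp_def)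
  have "tr (\<lambda>v. br (br a b) (E v)) = tr (\<lambda>v. br a (br b (E v))) - tr (\<lambda>v. br b (br a (E v)))"
    unfolding j by (rule tr_diff)
  also have "tr (\<lambda>v. br b (br a (E v))) = tr (\<lambda>v. br a (E (br b v)))"
    by (rule tr_comp[OF br_lin_r l2])
  also have "tr (\<lambda>v. br a (br b (E v))) - tr (\<lambda>v. br a (E (br b v)))
     = tr (\<lambda>v. br a (br b (E v)) - br a (E (br b v)))"
    by (rule tr_diff[symmetric])
  also have "(\<lambda>v. br a (br b (E v)) - br a (E (br b v))) = (\<lambda>v. - br a (br (E b) v))"
  proof
    fix v
    have "E (br b v) = br (E b) v + br b (E v)" using E by (simp add: der_def)
    then show "br a (br b (E v)) - br a (E (br b v)) = - br a (br (E b) v)"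
      by (simp add: br_add_r br_neg_r)
  qed
  also have "tr (\<lambda>v. - br a (br (E b) v)) = - kil a (E b)"
    unfolding kil_def by (rule tr_neg)
  finally show ?thesis using a by (simp add: Kset_def)
qed

lemma tr_Kg_der:
  assumes x: "x \<in> Kg" and E: "der E"
  shows "tr (\<lambda>v. br x (E v)) = 0"
proof -
  have sub: "subspace {x. tr (\<lambda>v. br x (E v)) = 0}"
    unfolding subspace_def by (simp add: br_add_l br_scale_l tr_add tr_scale tr_0)
  have "{br a b | a b. a \<in> Kset} \<subseteq> {x. tr (\<lambda>v. br x (E v)) = 0}"
    using tr_K_der[OF _ E] by blast
  then have "span {br a b | a b. a \<in> Kset} \<subseteq> {x. tr (\<lambda>v. br x (E v)) = 0}"
    using sub by (rule span_minimal)
  then have "x \<in> {x. tr (\<lambda>v. br x (E v)) = 0}" using x unfolding Kg_def by (rule subsetD)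
  then show ?thesis by simp
qed

end
context LA begin

definition pev :: "complex poly \<Rightarrow> ('a \<Rightarrow> 'a) \<Rightarrow> 'a \<Rightarrow> 'a" where
  "pev p f v = (\<Sum>i\<le>degree p. sc (coeff p i) ((f ^^ i) v))"

lemma pev_bound: assumes "degree p \<le> n"
  shows "pev p f v = (\<Sum>i\<le>n. sc (coeff p i) ((f ^^ i) v))"
proof -
  have "(\<Sum>i\<le>n. sc (coeff p i) ((f ^^ i) v)) = (\<Sum>i\<le>degree p. sc (coeff p i) ((f ^^ i) v))"
    by (rule sum.mono_neutral_right) (use assms in \<open>auto simp: coeff_eq_0\<close>)
  then show ?thesis by (simp add: pev_def)
qed

lemma pev_add: "pev (p + q) f v = pev p f v + pev q f v"
proof -
  let ?n = "max (degree p) (degree q)"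
  have "degree (p + q) \<le> ?n" by (rule degree_add_le) auto
  then have "pev (p + q) f v = (\<Sum>i\<le>?n. sc (coeff (p + q) i) ((f ^^ i) v))" by (rule pev_bound)
  also have "\<dots> = (\<Sum>i\<le>?n. sc (coeff p i) ((f ^^ i) v)) + (\<Sum>i\<le>?n. sc (coeff q i) ((f ^^ i) v))"
    by (simp add: scale_left_distrib sum.distrib)
  also have "\<dots> = pev p f v + pev q f v"
    using pev_bound[of p ?n f v] pev_bound[of q ?n f v] by simp
  finally show ?thesis .
qed

lemma pev_smult: "pev (smult c p) f v = sc c (pev p f v)"
proof -
  have "degree (smult c p) \<le> degree p" by (rule degree_smult_le)
  then have "pev (smult c p) f v = (\<Sum>i\<le>degree p. sc (c * coeff p i) ((f ^^ i) v))"
    by (simp add: pev_bound)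
  also have "\<dots> = sc c (pev p f v)"
    by (simp add: pev_def scale_sum_right)
  finally show ?thesis .
qed

lemma pev_0 [simp]: "pev 0 f v = 0" by (simp add: pev_def)

lemma pev_pCons: assumes f: "lin f"
  shows "pev (pCons a p) f v = sc a v + f (pev p f v)"
proof -
  have "degree (pCons a p) \<le> Suc (degree p)" by (rule degree_pCons_le)
  then have "pev (pCons a p) f v = (\<Sum>i\<le>Suc (degree p). sc (coeff (pCons a p) i) ((f ^^ i) v))"
    by (rule pev_bound)
  also have "\<dots> = (\<Sum>i\<le>degree p. sc (coeff p i) ((f ^^ Suc i) v)) + sc a v"
    by (subst sum.atMost_Suc_shift) simp
  also have "(\<Sum>i\<le>degree p. sc (coeff p i) ((f ^^ Suc i) v)) = f (pev p f v)"
    unfolding pev_def using f by (simp add: lin_sum lin_scale)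
  finally show ?thesis by (simp add: add.commute)
qed

lemma pev_lin: assumes f: "lin f" shows "lin (pev p f)"
proof -
  have lf: "lin (f ^^ i)" for i by (rule lin_funpow[OF f])
  show ?thesis unfolding lin_def pev_def
    by (simp add: lin_add[OF lf] lin_scale[OF lf] scale_right_distrib sum.distrib scale_sum_right mult.commute)
qed

lemma pev_const: "pev [:c:] f v = sc c v" by (simp add: pev_def)

lemma pev_mult: assumes f: "lin f" shows "pev (p * q) f v = pev p f (pev q f v)"
proof (induction p)
  case 0 then show ?case by simp
next
  case (pCons a p)
  have "pev (pCons a p * q) f v = pev (smult a q) f v + pev (pCons 0 (p * q)) f v"
    by (simp add: pev_add)
  also have "\<dots> = sc a (pev q f v) + f (pev p f (pev q f v))"
    by (simp add: pev_smult pev_pCons[OF f] pCons)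
  also have "\<dots> = pev (pCons a p) f (pev q f v)"
    by (simp add: pev_pCons[OF f])
  finally show ?case .
qed

lemma pev_comm: assumes f: "lin f" shows "pev p f (pev q f v) = pev q f (pev p f v)"
proof -
  have "pev (p * q) f v = pev (q * p) f v" by (rule arg_cong[of _ _ "\<lambda>r. pev r f v"], rule mult.commute)
  then show ?thesis by (simp only: pev_mult[OF f])
qed

lemma pev_lin1: assumes f: "lin f" shows "pev [:-z, 1:] f v = f v - sc z v"
proof -
  have "pev [:-z, 1:] f v = sc (-z) v + f (pev [:1:] f v)" by (rule pev_pCons[OF f])
  also have "\<dots> = sc (-z) v + f v" by (simp only: pev_const scale_one)
  also have "\<dots> = f v - sc z v" by (simp add: scale_minus_left)
  finally show ?thesis .
qed

lemma pev_1: "pev 1 f v = v"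
  using pev_const[of 1 f v] by (simp add: one_pCons)

lemma pev_monom: "pev (monom c k) f v = sc c ((f ^^ k) v)"
proof -
  have "pev (monom c k) f v = (\<Sum>i\<le>k. sc (coeff (monom c k) i) ((f ^^ i) v))"
    by (rule pev_bound[OF degree_monom_le])
  also have "\<dots> = (\<Sum>i\<le>k. if i = k then sc c ((f ^^ i) v) else 0)"
    by (rule sum.cong) auto
  also have "\<dots> = sc c ((f ^^ k) v)" by simp
  finally show ?thesis .
qed

lemma pev_sum: "pev (\<Sum>i\<in>I. p i) f v = (\<Sum>i\<in>I. pev (p i) f v)"
  by (induction I rule: infinite_finite_induct) (simp_all add: pev_add)

lemma pev_zero_vec: "lin f \<Longrightarrow> pev p f 0 = 0"
  by (rule lin_0[OF pev_lin])

lemma pev_power_lin: "lin f \<Longrightarrow> pev ([:-z, 1:] ^ k) f v = ((\<lambda>v. f v - sc z v) ^^ k) v"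
proof (induction k arbitrary: v)
  case 0 then show ?case by (simp add: pev_1)
next
  case (Suc k)
  have "pev ([:-z, 1:] ^ Suc k) f v = pev ([:-z, 1:] ^ k) f (pev [:-z, 1:] f v)"
    by (simp only: power_Suc2 pev_mult[OF Suc.prems])
  also have "\<dots> = ((\<lambda>v. f v - sc z v) ^^ k) (f v - sc z v)"
    using Suc by (simp add: pev_lin1)
  finally show ?case by (simp only: funpow_Suc_right o_apply)
qed

end
context LA begin

lemma pev_diff: "pev (p - q) f v = pev p f v - pev q f v"
proof -
  have "p - q = p + smult (-1) q" by simp
  then have "pev (p - q) f v = pev p f v + sc (-1) (pev q f v)" by (simp only: pev_add pev_smult)
  then show ?thesis by (simp add: scale_minus_left)
qed

lemma ann_vec: assumes f: "lin f" shows "\<exists>p. p \<noteq> 0 \<and> pev p f v = 0"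
proof -
  define n where "n = dim (UNIV::'a set)"
  define g where "g i = (f ^^ i) v" for i
  show ?thesis
  proof (cases "inj_on g {..n}")
    case False
    then obtain i j where ij: "i \<noteq> j" "g i = g j" unfolding inj_on_def by auto
    define p where "p = monom (1::complex) i - monom 1 j"
    have "coeff p i = 1" using ij(1) by (simp add: p_def)
    then have "p \<noteq> 0" by auto
    moreover have "pev p f v = 0" using ij(2)
      by (simp add: p_def pev_diff pev_monom g_def)
    ultimately show ?thesis by blast
  next
    case True
    let ?S = "g ` {..n}"
    have cS: "card ?S = Suc n" using card_image[OF True] by simp
    have "dependent ?S"
    proof (rule ccontr)
      assume "\<not> dependent ?S"
      then have "card ?S \<le> dim (UNIV::'a set)" by (intro fdv.independent_card_le_dim) auto
      then show False using cS n_def by simp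
    qed
    then obtain u where u: "\<exists>w\<in>?S. u w \<noteq> 0" "(\<Sum>w\<in>?S. sc (u w) w) = 0"
      using dependent_finite[of ?S] by auto
    define p where "p = (\<Sum>i\<le>n. monom (u (g i)) i)"
    have "pev p f v = (\<Sum>i\<le>n. sc (u (g i)) (g i))" by (simp add: p_def pev_sum pev_monom g_def)
    also have "\<dots> = (\<Sum>w\<in>?S. sc (u w) w)" by (simp add: sum.reindex[OF True])
    finally have pv: "pev p f v = 0" using u(2) by simp
    obtain i where i: "i \<le> n" "u (g i) \<noteq> 0" using u(1) by auto
    have "coeff p i = (\<Sum>j\<le>n. if j = i then u (g j) else 0)"
      by (simp add: p_def coeff_sum)
    also have "\<dots> = u (g i)" using i(1) by simp
    finally have "p \<noteq> 0" using i(2) by auto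
    then show ?thesis using pv by blast
  qed
qed

lemma ann: assumes f: "lin f" shows "\<exists>P. P \<noteq> 0 \<and> (\<forall>v. pev P f v = 0)"
proof -
  have "\<forall>b. \<exists>p. p \<noteq> 0 \<and> pev p f b = 0" using ann_vec[OF f] by blast
  then obtain pb where pb: "\<And>b. pb b \<noteq> 0" "\<And>b. pev (pb b) f b = 0" by metis
  define P where "P = (\<Prod>b\<in>Bs. pb b)"
  have "P \<noteq> 0" unfolding P_def using pb(1) Bs(1) by simp
  moreover have "pev P f b = 0" if b: "b \<in> Bs" for b
  proof -
    have "P = (\<Prod>c\<in>Bs - {b}. pb c) * pb b"
      unfolding P_def using prod.remove[OF Bs(1) b, of pb] by (simp add: mult.commute)
    then have "pev P f b = pev (\<Prod>c\<in>Bs - {b}. pb c) f (pev (pb b) f b)" by (simp add: pev_mult[OF f])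
    then show ?thesis using pb(2) pev_zero_vec[OF f] by simp
  qed
  moreover have "pev P f v = 0" if "\<forall>b\<in>Bs. pev P f b = 0" for v
  proof -
    have "v \<in> span Bs" using Bs(3) by simp
    then have "pev P f v \<in> {0}"
      using lin_span[OF pev_lin[OF f, of P], of Bs "{0}" v] that by simp
    then show ?thesis by simp
  qed
  ultimately show ?thesis by blast
qed

lemma annQ: assumes f: "lin f"
  shows "\<exists>R N. finite R \<and> 0 < N \<and> (\<forall>v. pev (\<Prod>z\<in>R. [:-z, 1:] ^ N) f v = 0)"
proof -
  obtain P where P: "P \<noteq> 0" "\<And>v. pev P f v = 0" using ann[OF f] by blast
  define R where "R = {z. poly P z = 0}"
  define N where "N = Suc (degree P)"
  have fR: "finite R" unfolding R_def using poly_roots_finite[OF P(1)] .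
  have ord: "order z P \<le> degree P" for z using order_degree[OF P(1)] .
  have lc: "lead_coeff P \<noteq> 0" using P(1) by simp
  have dec: "smult (lead_coeff P) (\<Prod>z\<in>R. [:-z, 1:] ^ order z P) = P"
    unfolding R_def by (rule complex_poly_decompose)
  have dec2: "(\<Prod>z\<in>R. [:-z, 1:] ^ order z P) = smult (1 / lead_coeff P) P"
  proof -
    have "smult (1 / lead_coeff P) P = smult (1 / lead_coeff P) (smult (lead_coeff P) (\<Prod>z\<in>R. [:-z, 1:] ^ order z P))"
      by (simp only: dec)
    also have "\<dots> = (\<Prod>z\<in>R. [:-z, 1:] ^ order z P)" using lc by simp
    finally show ?thesis by simp
  qed
  have "(\<Prod>z\<in>R. [:-z, 1:] ^ N) = (\<Prod>z\<in>R. [:-z, 1:] ^ (N - order z P) * [:-z, 1:] ^ order z P)"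
  proof (rule prod.cong[OF refl])
    fix z have "N - order z P + order z P = N" using ord[of z] by (simp add: N_def)
    then show "[:-z, 1:] ^ N = [:-z, 1:] ^ (N - order z P) * [:-z, 1:] ^ order z P"
      by (metis power_add)
  qed
  also have "\<dots> = (\<Prod>z\<in>R. [:-z, 1:] ^ (N - order z P)) * smult (1 / lead_coeff P) P"
    by (simp only: prod.distrib dec2)
  finally have eq: "(\<Prod>z\<in>R. [:-z, 1:] ^ N) = (\<Prod>z\<in>R. [:-z, 1:] ^ (N - order z P)) * smult (1 / lead_coeff P) P" .
  have "pev (\<Prod>z\<in>R. [:-z, 1:] ^ N) f v = 0" for v
    unfolding eq pev_mult[OF f] pev_smult P(2) using pev_zero_vec[OF f] by simp
  moreover have "0 < N" by (simp add: N_def)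
  ultimately show ?thesis using fR by blast
qed

end

lemma coprime_lin: assumes ab: "(a::complex) \<noteq> b" shows "coprime [:-a, 1:] [:-b, 1:]"
proof (rule coprimeI)
  fix c assume ca: "c dvd [:-a, 1:]" and cb: "c dvd [:-b, 1:]"
  have "c dvd [:-a, 1:] - [:-b, 1:]" using ca cb by (rule dvd_diff)
  moreover have "[:-a, 1:] - [:-b, 1:] = [:b - a:]" by simp
  ultimately have cd: "c dvd [:b - a:]" by simp
  have nz: "[:b - a:] \<noteq> 0" using ab by simp
  have "c \<noteq> 0" using cd nz by auto
  moreover have "degree c = 0" using dvd_imp_degree_le[OF cd nz] by simp
  ultimately show "is_unit c" by (simp add: is_unit_iff_degree)
qed

lemma coprime_pows:
  assumes "(z::complex) \<notin> S"
  shows "coprime ([:-z, 1:] ^ k) (\<Prod>x\<in>S. [:-x, 1:] ^ m)"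
proof -
  have "coprime [:-z, 1:] (\<Prod>x\<in>S. [:-x, 1:] ^ m)"
  proof (rule prod_coprime_right)
    fix x assume "x \<in> S"
    then have "z \<noteq> x" using assms by auto
    then show "coprime [:-z, 1:] ([:-x, 1:] ^ m)" using coprime_lin by simp
  qed
  then show ?thesis by simp
qed

lemma bez: assumes "coprime (A::complex poly) B" shows "\<exists>a b. a * A + b * B = 1"
  using bezout_coefficients_fst_snd[of A B] assms by (metis coprime_imp_gcd_eq_1)

lemma crt:
  assumes "finite S"
  shows "\<exists>q. \<forall>z\<in>S. \<exists>h. q = [:cnj z:] + h * [:-z, 1:] ^ M"
  using assms
proof (induction S rule: finite_induct)
  case empty then show ?case by simp
next
  case (insert z S)
  obtain qS where qS: "\<forall>x\<in>S. \<exists>h. qS = [:cnj x:] + h * [:-x, 1:] ^ M" using insert.IH by blast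
  let ?A = "[:-z, 1:] ^ M" and ?B = "\<Prod>x\<in>S. [:-x, 1:] ^ M"
  obtain a b where ab: "a * ?A + b * ?B = 1" using bez[OF coprime_pows[OF insert.hyps(2)]] by blast
  define q where "q = qS - (qS - [:cnj z:]) * b * ?B"
  have "\<exists>h. q = [:cnj x:] + h * [:-x, 1:] ^ M" if x: "x \<in> insert z S" for x
  proof (cases "x = z")
    case True
    have bB: "b * ?B = 1 - a * ?A" using ab by (simp add: algebra_simps)
    have "q = qS - (qS - [:cnj z:]) * (b * ?B)" by (simp add: q_def mult.assoc)
    also have "\<dots> = qS - (qS - [:cnj z:]) * (1 - a * ?A)" by (simp only: bB)
    also have "\<dots> = [:cnj z:] + ((qS - [:cnj z:]) * a) * ?A" by (simp add: algebra_simps)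
    finally have "q = [:cnj z:] + ((qS - [:cnj z:]) * a) * ?A" .
    then show ?thesis using True by blast
  next
    case False
    then have xS: "x \<in> S" using x by simp
    obtain h where h: "qS = [:cnj x:] + h * [:-x, 1:] ^ M" using qS xS by blast
    have "?B = [:-x, 1:] ^ M * (\<Prod>y\<in>S - {x}. [:-y, 1:] ^ M)"
      using prod.remove[OF insert.hyps(1) xS] by simp
    then have "q = [:cnj x:] + (h - (qS - [:cnj z:]) * b * (\<Prod>y\<in>S - {x}. [:-y, 1:] ^ M)) * [:-x, 1:] ^ M"
      unfolding q_def using h by (simp add: algebra_simps)
    then show ?thesis by blast
  qed
  then show ?case by blast
qed

locale LAD = LA +
  fixes D :: "'a \<Rightarrow> 'a" and R :: "complex set" and N :: nat
  assumes derD: "der D" and finR: "finite R" and Npos: "0 < N"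
    and annD: "\<And>v. pev (\<Prod>z\<in>R. [:-z, 1:] ^ N) D v = 0"
begin

lemma lD: "lin D" by (rule der_lin[OF derD])

definition T :: "complex \<Rightarrow> 'a \<Rightarrow> 'a" where "T c v = D v - sc c v"

lemma lin_T: "lin (T c)"
  unfolding T_def by (rule lin_minus[OF lD lin_smult[OF lin_id(2)]])

lemma pevT: "pev ([:-c, 1:] ^ k) D v = (T c ^^ k) v"
  unfolding T_def by (rule pev_power_lin[OF lD])

definition G :: "complex \<Rightarrow> 'a set" where "G c = {v. (T c ^^ N) v = 0}"

lemma decomp:
  assumes "finite S" shows "pev (\<Prod>z\<in>S. [:-z, 1:] ^ N) D v = 0 \<Longrightarrow> v \<in> span (\<Union>z\<in>S. G z)"
  using assms
proof (induction S arbitrary: v rule: finite_induct)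
  case empty
  then have "v = 0" by (simp add: pev_1)
  then show ?case by (simp add: span_zero)
next
  case (insert z S)
  let ?A = "[:-z, 1:] ^ N" and ?B = "\<Prod>x\<in>S. [:-x, 1:] ^ N"
  obtain a b where ab: "a * ?A + b * ?B = 1" using bez[OF coprime_pows[OF insert.hyps(2)]] by blast
  have AB: "pev (?A * ?B) D v = 0" using insert.prems insert.hyps by simp
  define v1 where "v1 = pev (b * ?B) D v"
  define v2 where "v2 = pev (a * ?A) D v"
  have "v = pev 1 D v" by (simp add: pev_1)
  also have "\<dots> = v2 + v1" unfolding v1_def v2_def by (simp only: ab[symmetric] pev_add)
  finally have v: "v = v2 + v1" .
  have "pev ?A D v1 = pev (?A * (b * ?B)) D v" unfolding v1_def by (simp only: pev_mult[OF lD])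
  also have "?A * (b * ?B) = b * (?A * ?B)" by (simp only: mult.left_commute)
  also have "pev (b * (?A * ?B)) D v = pev b D (pev (?A * ?B) D v)" by (simp only: pev_mult[OF lD])
  finally have "pev ?A D v1 = 0" using AB pev_zero_vec[OF lD] by simp
  then have v1G: "v1 \<in> G z" unfolding G_def by (simp add: pevT)
  have "pev ?B D v2 = pev (?B * (a * ?A)) D v" unfolding v2_def by (simp only: pev_mult[OF lD])
  also have "?B * (a * ?A) = a * (?A * ?B)" by (simp only: ac_simps)
  also have "pev (a * (?A * ?B)) D v = pev a D (pev (?A * ?B) D v)" by (simp only: pev_mult[OF lD])
  finally have "pev ?B D v2 = 0" using AB pev_zero_vec[OF lD] by simp
  then have "v2 \<in> span (\<Union>x\<in>S. G x)" by (rule insert.IH)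
  moreover have "span (\<Union>x\<in>S. G x) \<subseteq> span (\<Union>x\<in>insert z S. G x)" by (rule span_mono) auto
  moreover have "v1 \<in> span (\<Union>x\<in>insert z S. G x)" using v1G by (intro span_base) auto
  ultimately show ?case using v span_add by auto
qed

lemma all_decomp: "v \<in> span (\<Union>z\<in>R. G z)"
  by (rule decomp[OF finR annD])

lemma ker_zero: assumes nu: "\<nu> \<notin> R" and v: "(T \<nu> ^^ k) v = 0" shows "v = 0"
proof -
  let ?A = "[:-\<nu>, 1:] ^ k" and ?Q = "\<Prod>x\<in>R. [:-x, 1:] ^ N"
  obtain a b where ab: "a * ?A + b * ?Q = 1" using bez[OF coprime_pows[OF nu]] by blast
  have "v = pev 1 D v" by (simp add: pev_1)
  also have "\<dots> = pev a D (pev ?A D v) + pev b D (pev ?Q D v)"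
    by (simp only: ab[symmetric] pev_add pev_mult[OF lD])
  also have "\<dots> = 0" using v annD pev_zero_vec[OF lD] by (simp add: pevT)
  finally show ?thesis .
qed

lemma leib_step: "T (la + mu) (br a b) = br (T la a) b + br a (T mu b)"
proof -
  have "D (br a b) = br (D a) b + br a (D b)" using derD by (simp add: der_def)
  then show ?thesis unfolding T_def
    by (simp add: br_diff_l br_diff_r br_scale_l br_scale_r scale_left_distrib algebra_simps)
qed

lemma leib_aux: "\<forall>i j a b. i + j = n \<longrightarrow> (T la ^^ i) a = 0 \<longrightarrow> (T mu ^^ j) b = 0 \<longrightarrow> (T (la + mu) ^^ n) (br a b) = 0"
proof (induction n)
  case 0 then show ?case by simp
next
  case (Suc n)
  show ?case
  proof (intro allI impI)
    fix i j a b assume ij: "i + j = Suc n" and a: "(T la ^^ i) a = 0" and b: "(T mu ^^ j) b = 0"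
    have l: "lin (T (la + mu) ^^ n)" by (rule lin_funpow[OF lin_T])
    have l': "lin (T (la + mu) ^^ Suc n)" by (rule lin_funpow[OF lin_T])
    show "(T (la + mu) ^^ Suc n) (br a b) = 0"
    proof (cases "i = 0 \<or> j = 0")
      case True
      then have "br a b = 0" using a b by auto
      then show ?thesis using lin_0[OF l'] by simp
    next
      case False
      then obtain i' j' where i': "i = Suc i'" and j': "j = Suc j'" by (metis not0_implies_Suc)
      have "(T (la + mu) ^^ Suc n) (br a b) = (T (la + mu) ^^ n) (T (la + mu) (br a b))"
        by (simp only: funpow_Suc_right o_apply)
      also have "\<dots> = (T (la + mu) ^^ n) (br (T la a) b) + (T (la + mu) ^^ n) (br a (T mu b))"
        by (simp only: leib_step lin_add[OF l])
      also have "(T (la + mu) ^^ n) (br (T la a) b) = 0"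
      proof -
        have "(T la ^^ i') (T la a) = 0" using a i' by (simp only: funpow_Suc_right o_apply)
        then show ?thesis using Suc.IH ij i' b by auto
      qed
      also have "(T (la + mu) ^^ n) (br a (T mu b)) = 0"
      proof -
        have "(T mu ^^ j') (T mu b) = 0" using b j' by (simp only: funpow_Suc_right o_apply)
        then show ?thesis using Suc.IH ij j' a by auto
      qed
      finally show ?thesis by simp
    qed
  qed
qed

lemma leib: "(T la ^^ i) a = 0 \<Longrightarrow> (T mu ^^ j) b = 0 \<Longrightarrow> (T (la + mu) ^^ (i + j)) (br a b) = 0"
  using leib_aux by blast

end
context LAD begin

definition qq :: "complex poly" where
  "qq = (SOME q. \<forall>z\<in>R. \<exists>h. q = [:cnj z:] + h * [:-z, 1:] ^ (2 * N))"

lemma qq: "\<forall>z\<in>R. \<exists>h. qq = [:cnj z:] + h * [:-z, 1:] ^ (2 * N)"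
  unfolding qq_def by (rule someI_ex[OF crt[OF finR]])

lemma E_eig: assumes z: "z \<in> R" and v: "(T z ^^ (2 * N)) v = 0"
  shows "pev qq D v = sc (cnj z) v"
proof -
  obtain h where h: "qq = [:cnj z:] + h * [:-z, 1:] ^ (2 * N)" using qq z by blast
  have "pev qq D v = sc (cnj z) v + pev h D (pev ([:-z, 1:] ^ (2 * N)) D v)"
    unfolding h by (simp only: pev_add pev_const pev_mult[OF lD])
  also have "pev ([:-z, 1:] ^ (2 * N)) D v = 0" using v by (simp only: pevT)
  finally show ?thesis using pev_zero_vec[OF lD] by simp
qed

lemma poly_qq: assumes z: "z \<in> R" shows "poly qq z = cnj z"
proof -
  obtain h where h: "qq = [:cnj z:] + h * [:-z, 1:] ^ (2 * N)" using qq z by blast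
  have "poly ([:-z, 1:] ^ (2 * N)) z = 0" using Npos by (simp add: poly_power)
  then show ?thesis unfolding h by simp
qed

lemma G_2N: assumes "v \<in> G z" shows "(T z ^^ (2 * N)) v = 0"
proof -
  have "(T z ^^ (2 * N)) v = (T z ^^ N) ((T z ^^ N) v)"
    by (simp only: mult_2 funpow_add o_apply)
  also have "(T z ^^ N) v = 0" using assms by (simp add: G_def)
  finally show ?thesis using lin_0[OF lin_funpow[OF lin_T]] by simp
qed

definition E :: "'a \<Rightarrow> 'a" where "E = pev qq D"

lemma lin_E: "lin E" unfolding E_def by (rule pev_lin[OF lD])

lemma E_core:
  assumes la: "la \<in> R" and mu: "mu \<in> R" and a: "a \<in> G la" and b: "b \<in> G mu"
  shows "E (br a b) = br (E a) b + br a (E b)"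
proof -
  have Ea: "E a = sc (cnj la) a" unfolding E_def by (rule E_eig[OF la G_2N[OF a]])
  have Eb: "E b = sc (cnj mu) b" unfolding E_def by (rule E_eig[OF mu G_2N[OF b]])
  have rhs: "br (E a) b + br a (E b) = sc (cnj (la + mu)) (br a b)"
    unfolding Ea Eb by (simp add: br_scale_l br_scale_r scale_left_distrib)
  have ab: "(T (la + mu) ^^ (N + N)) (br a b) = 0"
    by (rule leib) (use a b in \<open>simp_all add: G_def\<close>)
  show ?thesis
  proof (cases "la + mu \<in> R")
    case True
    have "E (br a b) = sc (cnj (la + mu)) (br a b)" unfolding E_def
      by (rule E_eig[OF True]) (use ab in \<open>simp add: mult_2\<close>)
    then show ?thesis using rhs by simp
  next
    case False
    then have "br a b = 0" using ker_zero ab by blast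
    then show ?thesis using rhs lin_0[OF lin_E] by simp
  qed
qed

lemma E_der: "der E"
proof -
  let ?U = "\<Union>z\<in>R. G z"
  let ?P = "\<lambda>a b. E (br a b) = br (E a) b + br a (E b)"
  have sub1: "subspace {a. ?P a b}" for b
    unfolding subspace_def
    by (simp add: br_add_l br_scale_l lin_add[OF lin_E] lin_scale[OF lin_E] lin_0[OF lin_E]
        scale_right_distrib)
  have sub2: "subspace {b. ?P a b}" for a
    unfolding subspace_def
    by (simp add: br_add_r br_scale_r lin_add[OF lin_E] lin_scale[OF lin_E] lin_0[OF lin_E]
        scale_right_distrib)
  have s1: "?P a b" if b: "b \<in> ?U" for a b
  proof -
    have "?U \<subseteq> {a. ?P a b}" using b E_core by blast
    then have "span ?U \<subseteq> {a. ?P a b}" using sub1 by (rule span_minimal)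
    then show ?thesis using all_decomp by blast
  qed
  have "?P a b" for a b
  proof -
    have "?U \<subseteq> {b. ?P a b}" using s1 by blast
    then have "span ?U \<subseteq> {b. ?P a b}" using sub2 by (rule span_minimal)
    then show ?thesis using all_decomp by blast
  qed
  then show ?thesis unfolding der_def using lin_E by blast
qed

end
context LAD begin

lemma chain_k: "(T z ^^ k) w \<in> W' \<Longrightarrow> w \<notin> W' \<Longrightarrow> \<exists>u. u \<notin> W' \<and> T z u \<in> W'"
proof (induction k)
  case 0 then show ?case by simp
next
  case (Suc k)
  show ?case
  proof (cases "(T z ^^ k) w \<in> W'")
    case True then show ?thesis using Suc by blast
  next
    case False
    moreover have "T z ((T z ^^ k) w) \<in> W'" using Suc.prems(1) by simp
    ultimately show ?thesis by blast
  qed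
qed

lemma chain_S:
  assumes "finite S"
  shows "w \<notin> W' \<Longrightarrow> pev (\<Prod>z\<in>S. [:-z, 1:] ^ N) D w \<in> W' \<Longrightarrow> \<exists>u z. z \<in> S \<and> u \<notin> W' \<and> T z u \<in> W'"
  using assms
proof (induction S arbitrary: w rule: finite_induct)
  case empty then show ?case by (simp add: pev_1)
next
  case (insert z S)
  let ?A = "[:-z, 1:] ^ N" and ?B = "\<Prod>x\<in>S. [:-x, 1:] ^ N"
  have "pev (\<Prod>x\<in>insert z S. [:-x, 1:] ^ N) D w = pev ?A D (pev ?B D w)"
    using insert.hyps by (simp add: pev_mult[OF lD])
  then have h: "(T z ^^ N) (pev ?B D w) \<in> W'" using insert.prems(2) by (simp add: pevT)
  show ?case
  proof (cases "pev ?B D w \<in> W'")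
    case True
    then show ?thesis using insert.IH[OF insert.prems(1)] by blast
  next
    case False
    then show ?thesis using chain_k[OF h] by blast
  qed
qed

lemma eig_step: assumes "0 \<in> W'" "W' \<noteq> UNIV" shows "\<exists>u z. z \<in> R \<and> u \<notin> W' \<and> T z u \<in> W'"
proof -
  obtain w where w: "w \<notin> W'" using assms(2) by blast
  have "pev (\<Prod>z\<in>R. [:-z, 1:] ^ N) D w \<in> W'" using annD assms(1) by simp
  then show ?thesis using chain_S[OF finR w] by blast
qed

lemma tri_ex: "k \<le> dim (UNIV :: 'a set) \<Longrightarrow> \<exists>bs. length bs = k \<and> distinct bs \<and> independent (set bs) \<and>
   (\<forall>i<k. \<exists>z\<in>R. T z (bs ! i) \<in> span (set (take i bs)))"
proof (induction k)
  case 0 then show ?case by (simp add: independent_empty)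
next
  case (Suc k)
  then obtain bs where bs: "length bs = k" "distinct bs" "independent (set bs)"
     "\<forall>i<k. \<exists>z\<in>R. T z (bs ! i) \<in> span (set (take i bs))" by auto
  have ne: "span (set bs) \<noteq> UNIV"
  proof
    assume "span (set bs) = UNIV"
    then have "dim (UNIV :: 'a set) = dim (span (set bs))" by simp
    also have "\<dots> = card (set bs)" using bs(3) by (rule dim_span_eq_card_independent)
    also have "\<dots> = k" using bs(1,2) by (simp add: distinct_card)
    finally show False using Suc.prems by simp
  qed
  obtain u z where uz: "z \<in> R" "u \<notin> span (set bs)" "T z u \<in> span (set bs)"
    using eig_step[OF span_zero ne] by blast
  have un: "u \<notin> set bs" using uz(2) span_base by blast
  define bs' where "bs' = bs @ [u]"
  have "length bs' = Suc k" using bs(1) by (simp add: bs'_def)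
  moreover have "distinct bs'" using bs(2) un by (simp add: bs'_def)
  moreover have "independent (set bs')"
    using independent_insertI[OF uz(2) bs(3)] by (simp add: bs'_def)
  moreover have "\<forall>i<Suc k. \<exists>z\<in>R. T z (bs' ! i) \<in> span (set (take i bs'))"
  proof (intro allI impI)
    fix i assume i: "i < Suc k"
    show "\<exists>z\<in>R. T z (bs' ! i) \<in> span (set (take i bs'))"
    proof (cases "i < k")
      case True
      then have "bs' ! i = bs ! i" "take i bs' = take i bs" using bs(1) by (simp_all add: bs'_def nth_append)
      then show ?thesis using bs(4) True by simp
    next
      case False
      then have "i = k" using i by simp
      then have "bs' ! i = u" "take i bs' = bs" using bs(1) by (simp_all add: bs'_def nth_append)
      then show ?thesis using uz by auto
    qed
  qed
  ultimately show ?case by blast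
qed

lemma in_set_take: "x \<in> set (take i bs) \<longleftrightarrow> (\<exists>j<i. j < length bs \<and> bs ! j = x)"
  by (auto simp: in_set_conv_nth)

lemma nth_notin_take: "distinct bs \<Longrightarrow> i < length bs \<Longrightarrow> bs ! i \<notin> set (take i bs)"
  by (auto simp: in_set_take nth_eq_iff_index_eq)

lemma inv_take:
  assumes tri: "\<forall>j<length bs. \<exists>z. T z (bs ! j) \<in> span (set (take j bs))"
    and v: "v \<in> span (set (take i bs))"
  shows "D v \<in> span (set (take i bs))"
proof (rule lin_span[OF lD _ subspace_span v])
  fix x assume "x \<in> set (take i bs)"
  then obtain j where j: "j < i" "j < length bs" "bs ! j = x" by (auto simp: in_set_take)
  obtain z where z: "T z x \<in> span (set (take j bs))" using tri j by blast
  have "span (set (take j bs)) \<subseteq> span (set (take i bs))"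
    by (rule span_mono[OF set_take_subset_set_take]) (use j in simp)
  then have t: "T z x \<in> span (set (take i bs))" using z by blast
  have xs: "x \<in> span (set (take i bs))" using j by (intro span_base) (auto simp: in_set_take)
  have "D x = sc z x + T z x" by (simp add: T_def)
  then show "D x \<in> span (set (take i bs))" using t xs by (simp add: span_add span_scale)
qed

lemma pev_tri:
  assumes tri: "\<forall>j<length bs. \<exists>z. T z (bs ! j) \<in> span (set (take j bs))"
    and zi: "T z (bs ! i) \<in> span (set (take i bs))"
  shows "\<exists>s\<in>span (set (take i bs)). pev p D (bs ! i) = sc (poly p z) (bs ! i) + s"
proof (induction p)
  case 0 then show ?case by (simp add: span_zero)
next
  case (pCons a p)
  then obtain s where s: "s \<in> span (set (take i bs))" "pev p D (bs ! i) = sc (poly p z) (bs ! i) + s"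
    by blast
  have Db: "D (bs ! i) = sc z (bs ! i) + T z (bs ! i)" by (simp add: T_def)
  have "pev (pCons a p) D (bs ! i) = sc a (bs ! i) + D (sc (poly p z) (bs ! i) + s)"
    using s(2) by (simp add: pev_pCons[OF lD])
  also have "\<dots> = sc (poly (pCons a p) z) (bs ! i) + (sc (poly p z) (T z (bs ! i)) + D s)"
    by (simp add: lin_add[OF lD] lin_scale[OF lD] Db scale_right_distrib scale_left_distrib algebra_simps)
  finally show ?case using span_add span_scale zi inv_take[OF tri s(1)] by blast
qed

lemma rep_tri:
  assumes "distinct bs" "isb (set bs)" "i < length bs" "s \<in> span (set (take i bs))"
  shows "representation (set bs) (sc c (bs ! i) + s) (bs ! i) = c"
proof -
  have ind: "independent (set bs)" using assms(2) by (simp add: isb_def)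
  have "representation (set bs) s = representation (set (take i bs)) s"
    by (rule representation_extend[OF ind assms(4) set_take_subset])
  then have s0: "representation (set bs) s (bs ! i) = 0"
    using representation_ne_zero nth_notin_take[OF assms(1,3)] by metis
  have b1: "representation (set bs) (bs ! i) (bs ! i) = 1"
    using representation_basis[OF ind] assms(3) by simp
  show ?thesis using s0 b1 by (simp add: rep_add[OF assms(2)] rep_scale[OF assms(2)])
qed

end
context LAD begin

lemma D_down:
  assumes zi: "\<forall>j<length bs. D (bs ! j) \<in> span (set (take j bs))"
    and w: "w \<in> span (set (take (Suc m) bs))"
  shows "D w \<in> span (set (take m bs))"
proof (rule lin_span[OF lD _ subspace_span w])
  fix x assume "x \<in> set (take (Suc m) bs)"
  then obtain j where j: "j < Suc m" "j < length bs" "bs ! j = x" by (auto simp: in_set_take)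
  have "span (set (take j bs)) \<subseteq> span (set (take m bs))"
    by (rule span_mono[OF set_take_subset_set_take]) (use j in simp)
  then show "D x \<in> span (set (take m bs))" using zi j by blast
qed

lemma nilp:
  assumes H: "\<forall>E. der E \<longrightarrow> tr (\<lambda>v. D (E v)) = 0"
  shows "\<forall>v. (D ^^ dim (UNIV :: 'a set)) v = 0"
proof -
  define n where "n = dim (UNIV :: 'a set)"
  obtain bs where bs: "length bs = n" "distinct bs" "independent (set bs)"
     "\<forall>i<n. \<exists>z\<in>R. T z (bs ! i) \<in> span (set (take i bs))"
    using tri_ex[of n] by (auto simp: n_def)
  have "UNIV \<subseteq> span (set bs)"
    using fdv.card_eq_dim[of "set bs" UNIV] bs(1-3) by (simp add: distinct_card n_def)
  then have isbs: "isb (set bs)" using bs(3) by (auto simp: isb_def)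
  define zf where "zf i = (SOME z. z \<in> R \<and> T z (bs ! i) \<in> span (set (take i bs)))" for i
  have zf: "zf i \<in> R \<and> T (zf i) (bs ! i) \<in> span (set (take i bs))" if "i < n" for i
    unfolding zf_def using bs(4) that by (metis (mono_tags, lifting) someI_ex)
  have tri': "\<forall>j<length bs. \<exists>z. T z (bs ! j) \<in> span (set (take j bs))" using zf bs(1) by blast
  define r where "r = [:0, 1:] * qq"
  have pr: "pev r D v = D (E v)" for v
  proof -
    have "pev r D v = pev [:0, 1:] D (E v)" unfolding r_def E_def by (rule pev_mult[OF lD])
    also have "\<dots> = D (E v)" by (simp add: pev_pCons[OF lD] pev_const lin_0[OF lD])
    finally show ?thesis .
  qed
  have setbs: "set bs = (\<lambda>i. bs ! i) ` {..<n}" using bs(1) by (auto simp: in_set_conv_nth)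
  have injbs: "inj_on (\<lambda>i. bs ! i) {..<n}" using bs(1,2) by (simp add: inj_on_def nth_eq_iff_index_eq)
  have "pev r D = (\<lambda>v. D (E v))" by (rule ext) (rule pr)
  then have "tr (\<lambda>v. D (E v)) = tr (pev r D)" by simp
  also have "\<dots> = (\<Sum>c\<in>set bs. representation (set bs) (pev r D c) c)"
    by (rule tr_basis[OF isbs pev_lin[OF lD]])
  also have "\<dots> = (\<Sum>i<n. representation (set bs) (pev r D (bs ! i)) (bs ! i))"
    unfolding setbs by (simp add: sum.reindex[OF injbs])
  also have "\<dots> = (\<Sum>i<n. poly r (zf i))"
  proof (rule sum.cong[OF refl])
    fix i assume "i \<in> {..<n}"
    then have i: "i < n" by simp
    obtain s where s: "s \<in> span (set (take i bs))" "pev r D (bs ! i) = sc (poly r (zf i)) (bs ! i) + s"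
      using pev_tri[OF tri' conjunct2[OF zf[OF i]]] by blast
    show "representation (set bs) (pev r D (bs ! i)) (bs ! i) = poly r (zf i)"
      unfolding s(2) by (rule rep_tri[OF bs(2) isbs _ s(1)]) (use i bs(1) in simp)
  qed
  also have "\<dots> = (\<Sum>i<n. of_real ((cmod (zf i))\<^sup>2))"
  proof (rule sum.cong[OF refl])
    fix i assume "i \<in> {..<n}"
    then have "zf i \<in> R" using zf by simp
    then show "poly r (zf i) = of_real ((cmod (zf i))\<^sup>2)"
      unfolding r_def complex_norm_square by (simp add: poly_qq)
  qed
  also have "\<dots> = of_real (\<Sum>i<n. (cmod (zf i))\<^sup>2)" by simp
  finally have "of_real (\<Sum>i<n. (cmod (zf i))\<^sup>2) = (0::complex)" using H E_der by simp
  then have "(\<Sum>i<n. (cmod (zf i))\<^sup>2) = 0" by (rule of_real_eq_0_iff[THEN iffD1])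
  then have z0: "zf i = 0" if "i < n" for i
    using sum_nonneg_eq_0_iff[of "{..<n}" "\<lambda>i. (cmod (zf i))\<^sup>2"] that by simp
  have zi: "\<forall>j<length bs. D (bs ! j) \<in> span (set (take j bs))"
  proof (intro allI impI)
    fix j assume "j < length bs"
    then have "j < n" using bs(1) by simp
    then show "D (bs ! j) \<in> span (set (take j bs))" using zf[of j] z0[of j] by (simp add: T_def)
  qed
  have main: "\<forall>v. (D ^^ k) v \<in> span (set (take (n - k) bs))" if "k \<le> n" for k
    using that
  proof (induction k)
    case 0 then show ?case using isbs bs(1) by (simp add: isb_def)
  next
    case (Suc k)
    show ?case
    proof
      fix v
      have "(D ^^ k) v \<in> span (set (take (Suc (n - Suc k)) bs))"
        using Suc by (simp add: Suc_diff_Suc)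
      then have "D ((D ^^ k) v) \<in> span (set (take (n - Suc k) bs))" by (rule D_down[OF zi])
      then show "(D ^^ Suc k) v \<in> span (set (take (n - Suc k) bs))" by simp
    qed
  qed
  show ?thesis using main[of n] by (simp add: n_def)
qed

end
context LA begin

lemma ad_nil: assumes x: "x \<in> Kg" shows "\<exists>k. \<forall>v. (br x ^^ k) v = 0"
proof -
  obtain R N where RN: "finite R" "0 < N" "\<forall>v. pev (\<Prod>z\<in>R. [:-z, 1:] ^ N) (br x) v = 0"
    using annQ[OF br_lin_r] by blast
  have "LAD sc br (br x) R N"
    by (intro LAD.intro LA_axioms LAD_axioms.intro der_ad) (use RN in auto)
  then interpret L: LAD sc br "br x" R N .
  have "\<forall>E. der E \<longrightarrow> tr (\<lambda>v. br x (E v)) = 0" using tr_Kg_der[OF x] by blast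
  then show ?thesis using L.nilp by blast
qed

definition good :: "'a set \<Rightarrow> bool" where
  "good M \<longleftrightarrow> subspace M \<and> (\<forall>x\<in>M. \<forall>y\<in>M. br x y \<in> M) \<and> (\<forall>x\<in>M. \<exists>k. \<forall>v. (br x ^^ k) v = 0)"

lemma funpow_pres: "(\<And>u. u \<in> U \<Longrightarrow> f u \<in> U) \<Longrightarrow> v \<in> U \<Longrightarrow> (f ^^ k) v \<in> U"
  by (induction k) auto

lemma nil_chain:
  assumes pres: "\<And>u. u \<in> U \<Longrightarrow> f u \<in> U" and v0: "v0 \<in> U" "v0 \<notin> W'" and k: "(f ^^ k) v0 \<in> W'"
  shows "\<exists>u\<in>U. u \<notin> W' \<and> f u \<in> W'"
  using k
proof (induction k)
  case 0 then show ?case using v0 by simp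
next
  case (Suc k)
  show ?case
  proof (cases "(f ^^ k) v0 \<in> W'")
    case True then show ?thesis using Suc.IH by blast
  next
    case False
    moreover have "(f ^^ k) v0 \<in> U" by (rule funpow_pres[OF pres v0(1)])
    moreover have "f ((f ^^ k) v0) \<in> W'" using Suc.prems by simp
    ultimately show ?thesis by blast
  qed
qed

lemma dim_less: assumes "subspace A" "subspace B" "A \<subseteq> B" "A \<noteq> B" shows "dim A < dim B"
proof -
  have e: "span A = A" "span B = B" using assms(1,2) by simp_all
  have "A \<subset> B \<Longrightarrow> dim A < dim B" using fdv.dim_psubset[of A B] unfolding e .
  then show ?thesis using assms(3,4) by blast
qed

lemma engel:
  "good M \<Longrightarrow> subspace W \<Longrightarrow> subspace W' \<Longrightarrow> W' \<subseteq> W \<Longrightarrow> W' \<noteq> W \<Longrightarrow>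
   (\<forall>x\<in>M. \<forall>w\<in>W. br x w \<in> W) \<Longrightarrow> (\<forall>x\<in>M. \<forall>w\<in>W'. br x w \<in> W') \<Longrightarrow>
   \<exists>v\<in>W. v \<notin> W' \<and> (\<forall>x\<in>M. br x v \<in> W')"
proof (induction "dim M" arbitrary: M W W' rule: less_induct)
  case less
  note gM = less.prems(1)
  have sM: "subspace M" and cM: "\<And>x y. x \<in> M \<Longrightarrow> y \<in> M \<Longrightarrow> br x y \<in> M"
    and nM: "\<And>x. x \<in> M \<Longrightarrow> \<exists>k. \<forall>v. (br x ^^ k) v = 0"
    using gM unfolding good_def by auto
  show ?case
  proof (cases "M \<subseteq> {0}")
    case True
    obtain v where v: "v \<in> W" "v \<notin> W'" using less.prems(4,5) by blast
    have "br x v \<in> W'" if "x \<in> M" for x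
      using True that subspace_0[OF less.prems(3)] by auto
    then show ?thesis using v by blast
  next
    case False
    define Sub where "Sub = {A. good A \<and> A \<subseteq> M \<and> A \<noteq> M}"
    have g0: "good {0}" unfolding good_def
      by (auto intro: exI[of _ "1::nat"])
    have "{0} \<in> Sub" unfolding Sub_def using g0 False subspace_0[OF sM] by auto
    moreover have "\<forall>A. A \<in> Sub \<longrightarrow> dim A < Suc (dim M)"
      unfolding Sub_def by (auto intro: le_imp_less_Suc fdv.dim_subset)
    ultimately obtain A where A: "A \<in> Sub" and Amax: "\<And>B. B \<in> Sub \<Longrightarrow> dim B \<le> dim A"
      using ex_has_greatest_nat[of "\<lambda>A. A \<in> Sub" "{0}" dim "Suc (dim M)"] by blast
    have gA: "good A" and AM: "A \<subseteq> M" "A \<noteq> M" using A by (auto simp: Sub_def)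
    have sA: "subspace A" and cA: "\<And>x y. x \<in> A \<Longrightarrow> y \<in> A \<Longrightarrow> br x y \<in> A"
      using gA unfolding good_def by auto
    have dA: "dim A < dim M" by (rule dim_less[OF sA sM AM])
    obtain x where x: "x \<in> M" "x \<notin> A" and xn: "\<forall>a\<in>A. br a x \<in> A"
      using less.hyps[OF dA gA sM sA AM(1) AM(2)] cM AM(1) cA by blast
    define A' where "A' = span (insert x A)"
    have spA: "span A = A" using sA by simp
    have brk: "\<exists>c. y - sc c x \<in> A" if "y \<in> A'" for y
      using that unfolding A'_def span_breakdown_eq spA .
    have xA: "br x a \<in> A" if "a \<in> A" for a
    proof -
      have "br a x \<in> A" using xn that by blast
      then have "- br a x \<in> A" by (rule subspace_neg[OF sA])
      then show ?thesis by (simp add: br_anti[of x a])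
    qed
    have A'M: "A' \<subseteq> M" unfolding A'_def
      by (rule span_minimal) (use x(1) AM(1) sM in auto)
    have cA': "br y y' \<in> A'" if y: "y \<in> A'" and y': "y' \<in> A'" for y y'
    proof -
      obtain c where c: "y - sc c x \<in> A" using brk[OF y] by blast
      obtain c' where c': "y' - sc c' x \<in> A" using brk[OF y'] by blast
      define a where "a = y - sc c x"
      define a' where "a' = y' - sc c' x"
      have ya: "y = a + sc c x" "y' = a' + sc c' x" by (simp_all add: a_def a'_def)
      have "br y y' = br a a' + sc c' (br a x) + (sc c (br x a') + sc c (sc c' (br x x)))"
        unfolding ya by (simp add: br_add_l br_add_r br_scale_l br_scale_r)
      also have "\<dots> \<in> A"
        using c c' xn xA cA sA unfolding a_def[symmetric] a'_def[symmetric]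
        by (simp add: subspace_add subspace_scale subspace_0)
      finally have "br y y' \<in> A" .
      then show ?thesis unfolding A'_def using span_superset by blast
    qed
    have gA': "good A'" unfolding good_def
      using cA' A'M nM by (auto simp: A'_def)
    have "A \<subseteq> A'" unfolding A'_def using span_superset by blast
    moreover have "x \<in> A'" unfolding A'_def by (simp add: span_base)
    ultimately have "dim A < dim A'" using x(2) by (intro dim_less[OF sA]) (auto simp: A'_def)
    then have "A' \<notin> Sub" using Amax by force
    then have MA': "M = A'" using gA' A'M by (auto simp: Sub_def)
    define U where "U = {w\<in>W. \<forall>a\<in>A. br a w \<in> W'}"
    obtain v0 where v0: "v0 \<in> W" "v0 \<notin> W'" "\<forall>a\<in>A. br a v0 \<in> W'"
      using less.hyps[OF dA gA less.prems(2,3,4,5)] less.prems(6,7) AM(1) by blast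
    have v0U: "v0 \<in> U" using v0 by (simp add: U_def)
    have pres: "br x u \<in> U" if u: "u \<in> U" for u
    proof -
      have uW: "u \<in> W" and ua: "\<And>a. a \<in> A \<Longrightarrow> br a u \<in> W'" using u by (auto simp: U_def)
      have "br x u \<in> W" using less.prems(6) x(1) uW by blast
      moreover have "br a (br x u) \<in> W'" if a: "a \<in> A" for a
      proof -
        have "br a (br x u) = br (br a x) u + br x (br a u)" by (rule br_jac)
        moreover have "br (br a x) u \<in> W'" using ua xn a by blast
        moreover have "br x (br a u) \<in> W'" using less.prems(7) x(1) ua[OF a] by blast
        ultimately show ?thesis using subspace_add[OF less.prems(3)] by simp
      qed
      ultimately show ?thesis by (simp add: U_def)
    qed
    obtain k where k: "\<forall>v. (br x ^^ k) v = 0" using nM[OF x(1)] by blast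
    have "(br x ^^ k) v0 \<in> W'" using k subspace_0[OF less.prems(3)] by simp
    then obtain v where v: "v \<in> U" "v \<notin> W'" "br x v \<in> W'"
      using nil_chain[of U "br x", OF pres v0U v0(2)] by blast
    have "br y v \<in> W'" if y: "y \<in> M" for y
    proof -
      obtain c where c: "y - sc c x \<in> A" using brk y MA' by blast
      have "br y v = br (y - sc c x) v + sc c (br x v)" by (simp add: br_diff_l br_scale_l)
      moreover have "br (y - sc c x) v \<in> W'" using v(1) c by (simp add: U_def)
      ultimately show ?thesis using v(3) less.prems(3) by (simp add: subspace_add subspace_scale)
    qed
    then show ?thesis using v by (auto simp: U_def)
  qed
qed

end
context LA begin

lemma lin_foldr: "lin (\<lambda>y. foldr br xs y)"
proof (induction xs)
  case Nil then show ?case by (simp add: lin_id)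
next
  case (Cons x xs)
  then show ?case using lin_comp[OF br_lin_r Cons.IH] by (simp add: comp_def)
qed

lemma flag:
  "good M \<Longrightarrow> subspace W' \<Longrightarrow> (\<forall>x\<in>M. \<forall>w\<in>W'. br x w \<in> W') \<Longrightarrow> set xs \<subseteq> M \<Longrightarrow>
   dim (UNIV :: 'a set) \<le> length xs + dim W' \<Longrightarrow> foldr br xs w \<in> W'"
proof (induction "dim (UNIV :: 'a set) - dim W'" arbitrary: W' xs w rule: less_induct)
  case less
  show ?case
  proof (cases "W' = UNIV")
    case True then show ?thesis by simp
  next
    case False
    obtain v where v: "v \<notin> W'" "\<forall>x\<in>M. br x v \<in> W'"
      using engel[OF less.prems(1) subspace_UNIV less.prems(2) subset_UNIV False] less.prems(3) by blast
    define W'' where "W'' = span (insert v W')"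
    have sW'': "subspace W''" by (simp add: W''_def)
    have spW': "span W' = W'" using less.prems(2) by simp
    have sub: "W' \<subseteq> W''" unfolding W''_def using span_superset by blast
    have vW: "v \<in> W''" unfolding W''_def by (simp add: span_base)
    have dl: "dim W' < dim W''" by (rule dim_less[OF less.prems(2) sW'' sub]) (use v vW in blast)
    have du: "dim W'' \<le> dim (UNIV :: 'a set)" by (rule fdv.dim_subset) simp
    have dW: "dim W' < dim (UNIV :: 'a set)" by (rule dim_less[OF less.prems(2) subspace_UNIV]) (use False in auto)
    have inv: "br x y \<in> W'" if x: "x \<in> M" and y: "y \<in> W''" for x y
    proof -
      obtain c where c: "y - sc c v \<in> W'" using y unfolding W''_def span_breakdown_eq spW' by blast
      have "br x y = br x (y - sc c v) + sc c (br x v)" by (simp add: br_diff_r br_scale_r)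
      moreover have "br x (y - sc c v) \<in> W'" using less.prems(3) x c by blast
      ultimately show ?thesis using v(2) x less.prems(2) by (simp add: subspace_add subspace_scale)
    qed
    show ?thesis
    proof (cases xs)
      case Nil
      then show ?thesis using less.prems(5) dW by simp
    next
      case (Cons x xs')
      have "foldr br xs' w \<in> W''"
      proof (rule less.hyps[of W''])
        show "dim (UNIV :: 'a set) - dim W'' < dim (UNIV :: 'a set) - dim W'" using dl du dW by simp
        show "good M" by (rule less.prems(1))
        show "subspace W''" by (rule sW'')
        show "\<forall>x\<in>M. \<forall>w\<in>W''. br x w \<in> W''" using inv sub by blast
        show "set xs' \<subseteq> M" using less.prems(4) Cons by simp
        show "dim (UNIV :: 'a set) \<le> length xs' + dim W''" using less.prems(5) Cons dl by simp
      qed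
      then show ?thesis using Cons inv less.prems(4) by simp
    qed
  qed
qed

lemma derived_shift:
  "derived_series sc br I (Suc j) = derived_series sc br (derived_series sc br I (Suc 0)) j"
proof (induction j)
  case 0 then show ?case by simp
next
  case (Suc j)
  have "derived_series sc br I (Suc (Suc j)) =
     span {br x y | x y. x \<in> derived_series sc br I (Suc j) \<and> y \<in> derived_series sc br I (Suc j)}"
    by (rule derived_series.simps(2))
  also have "\<dots> = span {br x y | x y. x \<in> derived_series sc br (derived_series sc br I (Suc 0)) j \<and>
                                   y \<in> derived_series sc br (derived_series sc br I (Suc 0)) j}"
    by (simp only: Suc.IH)
  also have "\<dots> = derived_series sc br (derived_series sc br I (Suc 0)) (Suc j)"
    by (rule derived_series.simps(2)[symmetric])
  finally show ?case .
qed

lemma derived_subspace: "subspace I \<Longrightarrow> subspace (derived_series sc br I j)"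
  by (cases j) simp_all

lemma K_solvable: "solvable_set sc br Kset"
proof -
  define NN where "NN = derived_series sc br Kset (Suc 0)"
  have NN: "NN = span {br x y | x y. x \<in> Kset \<and> y \<in> Kset}" by (simp add: NN_def)
  have sK: "subspace Kset" by (rule subspace_K)
  have idK: "\<And>x y. y \<in> Kset \<Longrightarrow> br x y \<in> Kset" using K_ideal by (simp add: lie_ideal_def)
  have gen: "{br x y | x y. x \<in> Kset \<and> y \<in> Kset} \<subseteq> Kset"
  proof (rule subsetI)
    fix t assume "t \<in> {br x y | x y. x \<in> Kset \<and> y \<in> Kset}"
    then obtain x y where "t = br x y" "y \<in> Kset" by blast
    then show "t \<in> Kset" using idK by simp
  qed
  have NNK: "NN \<subseteq> Kset" unfolding NN by (rule span_minimal[OF gen sK])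
  have gen2: "{br x y | x y. x \<in> Kset \<and> y \<in> Kset} \<subseteq> {br a b | a b. a \<in> Kset}" by blast
  have NNKg: "NN \<subseteq> Kg" unfolding NN Kg_def by (rule span_mono[OF gen2])
  have sNN: "subspace NN" unfolding NN by (rule subspace_span)
  have cNN: "br x y \<in> NN" if "x \<in> NN" "y \<in> NN" for x y
  proof -
    have "x \<in> Kset" "y \<in> Kset" using that NNK by auto
    then have "br x y \<in> {br x y | x y. x \<in> Kset \<and> y \<in> Kset}" by blast
    then show ?thesis unfolding NN by (rule span_base)
  qed
  have nNN: "\<exists>k. \<forall>v. (br x ^^ k) v = 0" if "x \<in> NN" for x
    using that NNKg ad_nil by blast
  have gNN: "good NN" unfolding good_def using sNN cNN nNN by blast
  define n where "n = dim (UNIV :: 'a set)"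
  define Z where "Z j = {y. \<forall>xs. set xs \<subseteq> NN \<longrightarrow> n \<le> length xs + j \<longrightarrow> foldr br xs y = 0}" for j
  have Zi: "y \<in> Z j \<longleftrightarrow> (\<forall>xs. set xs \<subseteq> NN \<longrightarrow> n \<le> length xs + j \<longrightarrow> foldr br xs y = 0)" for y j
    unfolding Z_def by (rule mem_Collect_eq)
  have sZ: "subspace (Z j)" for j
    unfolding subspace_def
  proof (intro conjI ballI allI)
    show "0 \<in> Z j" unfolding Zi by (simp add: lin_0[OF lin_foldr])
  next
    fix x y assume x: "x \<in> Z j" and y: "y \<in> Z j"
    show "x + y \<in> Z j" unfolding Zi
    proof (intro allI impI)
      fix xs assume h: "set xs \<subseteq> NN" "n \<le> length xs + j"
      have "foldr br xs x = 0" "foldr br xs y = 0" using x y h unfolding Zi by blast+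
      then show "foldr br xs (x + y) = 0" by (simp add: lin_add[OF lin_foldr])
    qed
  next
    fix c x assume x: "x \<in> Z j"
    show "sc c x \<in> Z j" unfolding Zi
    proof (intro allI impI)
      fix xs assume h: "set xs \<subseteq> NN" "n \<le> length xs + j"
      have "foldr br xs x = 0" using x h unfolding Zi by blast
      then show "foldr br xs (sc c x) = 0" by (simp add: lin_scale[OF lin_foldr])
    qed
  qed
  have main: "derived_series sc br NN j \<subseteq> NN \<inter> Z j" for j
  proof (induction j)
    case 0
    have "foldr br xs y \<in> {0}" if "set xs \<subseteq> NN" "n \<le> length xs" for xs y
    proof (rule flag[OF gNN subspace_single_0])
      show "\<forall>x\<in>NN. \<forall>w\<in>{0}. br x w \<in> {0}" by simp
      show "set xs \<subseteq> NN" by (rule that(1))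
      show "dim (UNIV :: 'a set) \<le> length xs + dim {0::'a}" using that(2) by (simp add: n_def)
    qed
    then have "NN \<subseteq> Z 0" unfolding Zi by (simp add: subset_iff Zi)
    then show ?case by simp
  next
    case (Suc j)
    have "span {br x y | x y. x \<in> derived_series sc br NN j \<and> y \<in> derived_series sc br NN j} \<subseteq> NN \<inter> Z (Suc j)"
    proof (rule span_minimal)
      show "subspace (NN \<inter> Z (Suc j))" by (rule subspace_inter[OF sNN sZ])
      show "{br x y | x y. x \<in> derived_series sc br NN j \<and> y \<in> derived_series sc br NN j} \<subseteq> NN \<inter> Z (Suc j)"
      proof (rule subsetI)
        fix t assume "t \<in> {br x y | x y. x \<in> derived_series sc br NN j \<and> y \<in> derived_series sc br NN j}"
        then obtain x y where t: "t = br x y" and x: "x \<in> derived_series sc br NN j" and y: "y \<in> derived_series sc br NN j"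
          by blast
        have xN: "x \<in> NN" using x Suc.IH by blast
        have yN: "y \<in> NN" using y Suc.IH by blast
        have yZ: "y \<in> Z j" using y Suc.IH by blast
        have "foldr br xs (br x y) = 0" if "set xs \<subseteq> NN" "n \<le> length xs + Suc j" for xs
        proof -
          have "set (xs @ [x]) \<subseteq> NN" using that xN by simp
          moreover have "n \<le> length (xs @ [x]) + j" using that by simp
          ultimately have "foldr br (xs @ [x]) y = 0" using yZ unfolding Zi by blast
          then show ?thesis by simp
        qed
        then have "br x y \<in> Z (Suc j)" unfolding Zi by blast
        then show "t \<in> NN \<inter> Z (Suc j)" using cNN[OF xN yN] t by simp
      qed
    qed
    then show ?case by simp
  qed
  have sub0: "derived_series sc br NN n \<subseteq> {0}"
  proof
    fix y assume "y \<in> derived_series sc br NN n"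
    then have "y \<in> Z n" using main by blast
    then have "set ([]::'a list) \<subseteq> NN \<longrightarrow> n \<le> length ([]::'a list) + n \<longrightarrow> foldr br [] y = 0"
      unfolding Zi by (rule spec)
    then have "foldr br [] y = 0" by simp
    then show "y \<in> {0}" by simp
  qed
  have z0: "0 \<in> derived_series sc br NN n" by (rule subspace_0[OF derived_subspace[OF sNN]])
  have "derived_series sc br NN n = {0}" using sub0 z0 by (intro subset_antisym) auto
  moreover have "derived_series sc br Kset (Suc n) = derived_series sc br NN n"
    unfolding NN_def by (rule derived_shift)
  ultimately have "derived_series sc br Kset (Suc n) = {0}" by simp
  then show ?thesis unfolding solvable_set_def by (rule exI)
qed

end

theorem proposition3p1:
  fixes sc :: "complex \<Rightarrow> 'a::ab_group_add \<Rightarrow> 'a" and br :: "'a \<Rightarrow> 'a \<Rightarrow> 'a"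
  assumes "lie_algebra sc br" and "finite_dim sc"
  shows "(semisimple sc br \<longrightarrow> (\<forall>m. CPA_structure sc br m \<longrightarrow> (\<forall>x y. m x y = 0)))
       \<and> (\<forall>m. CPA_structure sc br m \<longrightarrow> (\<forall>x y. m x y \<in> lie_radical sc br))"
proof -
  interpret LA sc br by (rule LA.intro[OF assms])
  have solv: "solvable_set sc br Kset" by (rule K_solvable)
  have idl: "lie_ideal sc br Kset" by (rule K_ideal)
  show ?thesis
  proof (intro conjI impI allI)
    fix m x y assume ss: "semisimple sc br" and m: "CPA_structure sc br m"
    then have "Kset = {0}" using solv idl unfolding semisimple_def by blast
    then show "m x y = 0" using CPA_in_K[OF m] by simp
  next
    fix m x y assume m: "CPA_structure sc br m"
    have "m x y \<in> \<Union>{I. lie_ideal sc br I \<and> solvable_set sc br I}"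
      using CPA_in_K[OF m] idl solv by blast
    then show "m x y \<in> lie_radical sc br" unfolding lie_radical_def by (rule span_base)
  qed
qed


end
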